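(* Let $d\ge1$, let $(\varphi_n)_{n=0}^\infty$ with $\varphi_0\equiv1$ be a basis in $H(\mathbb{C}^d)$, and let $K\subset K_1$ be compact subsets of $\mathbb{C}^d$ such that for every entire function $h=\sum_{n=0}^\infty h_n\varphi_n$ we have $\sum_{n=0}^\infty|h_n|\,|\varphi_n|_K\le |h|_{K_1}$. Suppose $G\supset K_1$ is a domain in $\mathbb{C}^d$ such that $(\varphi_n)$ (restricted to $G$) is also a basis of $H(G)$. Then for every bounded holomorphic function $f$ on $G$ with expansion $f=\sum_{n=0}^\infty f_n\varphi_n$ in $H(G)$, $$\sum_{n=0}^\infty |f_n|\,|\varphi_n|_K\le \sup_{z\in G}|f(z)|.$$
   Context: $H(G)$ is the space of holomorphic functions on a domain $G$ with the topology of uniform convergence on compact subsets; a basis of $H(G)$ is a sequence such that every $f\in H(G)$ has a unique expansion $f=\sum f_n\varphi_n$ converging uniformly on compact subsets of $G$. $|f|_K:=\sup_K|f|$. *)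

theory Defs
  imports "HOL-Analysis.Analysis"
begin

text \<open>Points of C^d are vectors complex^'n, with 'n a finite index type (d = CARD('n) \<ge> 1).\<close>

definition holo_on :: "(complex^'n) set \<Rightarrow> ((complex^'n) \<Rightarrow> complex) \<Rightarrow> bool" where
  "holo_on G f \<longleftrightarrow> (\<forall>z\<in>G. \<exists>c::complex^'n.
      (f has_derivative (\<lambda>h. \<Sum>i\<in>UNIV. c$i * h$i)) (at z))"

text \<open>Sup norm |f|_K (with the convention |f|_{empty} = 0).\<close>
definition supnorm :: "'a set \<Rightarrow> ('a \<Rightarrow> complex) \<Rightarrow> real" where
  "supnorm K f = Sup (insert 0 ((\<lambda>z. norm (f z)) ` K))"

definition expansion :: "(complex^'n) set \<Rightarrow> (nat \<Rightarrow> complex^'n \<Rightarrow> complex)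
    \<Rightarrow> (nat \<Rightarrow> complex) \<Rightarrow> (complex^'n \<Rightarrow> complex) \<Rightarrow> bool" where
  "expansion G \<phi> c f \<longleftrightarrow> (\<forall>K. compact K \<and> K \<subseteq> G \<longrightarrow>
      uniform_limit K (\<lambda>N z. \<Sum>n<N. c n * \<phi> n z) f sequentially)"

definition is_basis :: "(complex^'n) set \<Rightarrow> (nat \<Rightarrow> complex^'n \<Rightarrow> complex) \<Rightarrow> bool" where
  "is_basis G \<phi> \<longleftrightarrow> (\<forall>n. holo_on G (\<phi> n)) \<and>
      (\<forall>f. holo_on G f \<longrightarrow> (\<exists>!c. expansion G \<phi> c f))"

end

theory Submission
  imports Defs
begin

lemma holo_sum:
  fixes \<phi> :: "nat \<Rightarrow> complex^'n \<Rightarrow> complex" and c :: "nat \<Rightarrow> complex"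
  assumes "\<forall>n. holo_on UNIV (\<phi> n)"
  shows "holo_on UNIV (\<lambda>z. \<Sum>n<N. c n * \<phi> n z)"
  unfolding holo_on_def
proof
  fix z :: "complex^'n"
  have "\<forall>n. \<exists>d::complex^'n. (\<phi> n has_derivative (\<lambda>h. \<Sum>i\<in>UNIV. d$i * h$i)) (at z)"
    using assms unfolding holo_on_def by blast
  then obtain d where d: "\<And>n. (\<phi> n has_derivative (\<lambda>h. \<Sum>i\<in>UNIV. d n$i * h$i)) (at z)"
    by metis
  have D: "((\<lambda>z. \<Sum>n<N. c n * \<phi> n z) has_derivative
     (\<lambda>h. \<Sum>n<N. c n * (\<Sum>i\<in>UNIV. d n $i * h$i))) (at z)"
    by (intro has_derivative_sum has_derivative_mult_right d)
  have eq: "(\<lambda>h. \<Sum>n<N. c n * (\<Sum>i\<in>UNIV. d n $i * h$i)) =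
       (\<lambda>h. \<Sum>i\<in>UNIV. (\<chi> i. \<Sum>n<N. c n * d n $ i) $ i * h$i)"
    by (auto simp: sum_distrib_left sum_distrib_right mult.assoc intro!: ext sum.swap)
  show "\<exists>e::complex^'n. ((\<lambda>z. \<Sum>n<N. c n * \<phi> n z) has_derivative (\<lambda>h. \<Sum>i\<in>UNIV. e$i * h$i)) (at z)"
    using D unfolding eq by blast
qed

lemma supnorm_nonneg:
  assumes "bdd_above ((\<lambda>z. norm (g z)) ` A)"
  shows "0 \<le> supnorm A g"
  unfolding supnorm_def using assms by (intro cSup_upper) auto

theorem mainTheorem4:
  fixes \<phi> :: "nat \<Rightarrow> complex^'n \<Rightarrow> complex"
    and K K1 G :: "(complex^'n) set"
    and f :: "complex^'n \<Rightarrow> complex" and c :: "nat \<Rightarrow> complex"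
  assumes phi0: "\<phi> 0 = (\<lambda>_. 1)"
    and basis_entire: "is_basis UNIV \<phi>"
    and cK: "compact K" and cK1: "compact K1" and KK1: "K \<subseteq> K1"
    and ineq: "\<And>h a. holo_on UNIV h \<Longrightarrow> expansion UNIV \<phi> a h \<Longrightarrow>
        summable (\<lambda>n. norm (a n) * supnorm K (\<phi> n)) \<and>
        (\<Sum>n. norm (a n) * supnorm K (\<phi> n)) \<le> supnorm K1 h"
    and G_open: "open G" and G_conn: "connected G" and G_ne: "G \<noteq> {}"
    and K1G: "K1 \<subseteq> G"
    and basis_G: "is_basis G \<phi>"
    and f_holo: "holo_on G f" and f_bdd: "bounded (f ` G)"
    and f_exp: "expansion G \<phi> c f"
  shows "summable (\<lambda>n. norm (c n) * supnorm K (\<phi> n)) \<and>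
         (\<Sum>n. norm (c n) * supnorm K (\<phi> n)) \<le> (SUP z\<in>G. norm (f z))"
proof -
  define S where "S = (SUP z\<in>G. norm (f z))"
  define t where "t n = norm (c n) * supnorm K (\<phi> n)" for n
  have holo: "\<forall>n. holo_on UNIV (\<phi> n)" using basis_entire unfolding is_basis_def by blast
  have bddf: "bdd_above ((\<lambda>z. norm (f z)) ` G)"
    using f_bdd unfolding bounded_iff bdd_above_def by auto
  have fS: "norm (f z) \<le> S" if "z \<in> G" for z
    unfolding S_def using bddf that by (intro cSUP_upper) auto
  have S0: "0 \<le> S" using G_ne fS by (meson ex_in_conv norm_ge_zero order_trans)
  have tnn: "0 \<le> t n" for n
  proof -
    have "continuous_on UNIV (\<phi> n)"
    proof (rule continuous_at_imp_continuous_on, intro ballI)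
      fix z :: "complex^'n"
      obtain d :: "complex^'n" where "(\<phi> n has_derivative (\<lambda>h. \<Sum>i\<in>UNIV. d$i * h$i)) (at z)"
        using holo unfolding holo_on_def by blast
      then show "isCont (\<phi> n) z" by (rule has_derivative_continuous)
    qed
    then have "compact (\<phi> n ` K)" using cK by (meson compact_continuous_image continuous_on_subset subset_UNIV)
    then have "bounded (\<phi> n ` K)" by (rule compact_imp_bounded)
    then have "bdd_above ((\<lambda>z. norm (\<phi> n z)) ` K)"
      unfolding bounded_iff bdd_above_def by auto
    then show ?thesis unfolding t_def by (simp add: supnorm_nonneg)
  qed
  define h where "h N = (\<lambda>z. \<Sum>n<N. c n * \<phi> n z)" for N
  have key: "sum t {..<N} \<le> supnorm K1 (h N)" for N
  proof -
    define a where "a n = (if n < N then c n else 0)" for n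
    have hh: "holo_on UNIV (h N)" unfolding h_def by (rule holo_sum[OF holo])
    have "expansion UNIV \<phi> a (h N)"
      unfolding expansion_def
    proof (intro allI impI)
      fix L :: "(complex^'n) set"
      show "uniform_limit L (\<lambda>M z. \<Sum>n<M. a n * \<phi> n z) (h N) sequentially"
      proof (rule uniform_limitI)
        fix e :: real assume "0 < e"
        have "\<forall>M\<ge>N. \<forall>z\<in>L. dist (\<Sum>n<M. a n * \<phi> n z) (h N z) < e"
        proof (intro allI impI ballI)
          fix M z assume "N \<le> M" "z \<in> L"
          have "(\<Sum>n<M. a n * \<phi> n z) = (\<Sum>n<N. a n * \<phi> n z)"
            using \<open>N \<le> M\<close> by (intro sum.mono_neutral_right) (auto simp: a_def)
          also have "\<dots> = h N z" unfolding h_def a_def by simp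
          finally show "dist (\<Sum>n<M. a n * \<phi> n z) (h N z) < e" using \<open>0 < e\<close> by simp
        qed
        then show "\<forall>\<^sub>F M in sequentially. \<forall>z\<in>L. dist (\<Sum>n<M. a n * \<phi> n z) (h N z) < e"
          unfolding eventually_sequentially by blast
      qed
    qed
    from ineq[OF hh this] have "(\<Sum>n. norm (a n) * supnorm K (\<phi> n)) \<le> supnorm K1 (h N)" by blast
    moreover have "(\<Sum>n. norm (a n) * supnorm K (\<phi> n)) = (\<Sum>n<N. norm (a n) * supnorm K (\<phi> n))"
      by (rule suminf_finite) (auto simp: a_def)
    moreover have "(\<Sum>n<N. norm (a n) * supnorm K (\<phi> n)) = sum t {..<N}"
      unfolding t_def a_def by simp
    ultimately show ?thesis by simp
  qed
  have bound: "sum t {..<M} \<le> S" for M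
  proof (rule field_le_epsilon)
    fix e :: real assume e: "0 < e"
    have "uniform_limit K1 h f sequentially"
      using f_exp cK1 K1G unfolding expansion_def h_def by blast
    from uniform_limitD[OF this e] obtain N0 where
      N0: "\<And>N z. N \<ge> N0 \<Longrightarrow> z \<in> K1 \<Longrightarrow> dist (h N z) (f z) < e"
      unfolding eventually_sequentially by blast
    define N where "N = max M N0"
    have "sum t {..<M} \<le> sum t {..<N}"
      unfolding N_def by (intro sum_mono2) (auto simp: tnn)
    also have "\<dots> \<le> supnorm K1 (h N)" by (rule key)
    also have "\<dots> \<le> S + e"
      unfolding supnorm_def
    proof (rule cSup_least)
      show "insert 0 ((\<lambda>z. norm (h N z)) ` K1) \<noteq> {}" by simp
      fix x assume "x \<in> insert 0 ((\<lambda>z. norm (h N z)) ` K1)"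
      then consider "x = 0" | z where "z \<in> K1" "x = norm (h N z)" by auto
      then show "x \<le> S + e"
      proof cases
        case 1 then show ?thesis using S0 e by simp
      next
        case 2
        have "dist (h N z) (f z) < e" using N0 2 unfolding N_def by simp
        moreover have "norm (f z) \<le> S" using fS 2 K1G by auto
        moreover have "norm (h N z) \<le> norm (f z) + dist (h N z) (f z)"
          by (simp add: dist_norm norm_triangle_sub)
        ultimately show ?thesis using 2 by simp
      qed
    qed
    finally show "sum t {..<M} \<le> S + e" .
  qed
  have sm: "summable t" by (rule summableI_nonneg_bounded[OF tnn bound])
  have "suminf t \<le> S" by (rule suminf_le_const[OF sm bound])
  with sm show ?thesis unfolding t_def S_def by simp
qed

end
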